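(* Assume CH. If $\mathcal{I}$ is an unboring ideal, then there is an uncountable Mr\'owka space in $\mathrm{FinBW}(\mathcal{I})$.
   Context: An ideal on an infinite countable set $X$ is a family $\mathcal{I}\subseteq\mathcal{P}(X)$ closed under subsets and finite unions, containing all finite subsets, with $X\notin\mathcal{I}$. A space $X$ is in $\mathrm{FinBW}(\mathcal{I})$ if $X$ is Hausdorff and for every sequence $(x_n)_{n\in\bigcup\mathcal{I}}$ in $X$ there is $A\notin\mathcal{I}$ with $(x_n)_{n\in A}$ convergent in $X$. $\mathrm{Fin}^2$: ideal on $\omega^2$ of all $A$ with only finitely many $n$ such that $\{m:(n,m)\in A\}$ is infinite. $\mathcal{BI}$: ideal on $\omega^3$ of all $A$ for which there is $k$ with $\{(j,l):(i,j,l)\in A\}\in\mathrm{Fin}^2$ for $i<k$ and finite for $i\ge k$. $\mathcal{I}\sqsubseteq\mathcal{J}$: there is a bijection $f:\bigcup\mathcal{J}\to\bigcup\mathcal{I}$ with $f^{-1}[A]\in\mathcal{J}$ for all $A\in\mathcal{I}$. $\mathcal{I}$ is unboring if $\mathcal{BI}\not\sqsubseteq\mathcal{I}$. A Mr\'owka space is $\Phi(\mathcal{A})$ for an infinite almost disjoint family $\mathcal{A}$ of infinite subsets of $\omega$: underlying set $\omega\cup\mathcal{A}\cup\{\infty\}$, points of $\omega$ isolated, basic neighbourhoods of $A\in\mathcal{A}$ are $\{A\}\cup(A\setminus F)$ ($F\subseteq\omega$ finite), of $\infty$ are $\{\infty\}\cup(\mathcal{A}\setminus G)\cup(\omega\setminus(F\cup\bigcup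 G))$ ($F\subseteq\omega$, $G\subseteq\mathcal{A}$ finite). *)

theory Defs
  imports "HOL-Analysis.Analysis" "HOL-Library.Equipollence"
begin

definition CH :: bool where
  "CH \<longleftrightarrow> (\<forall>A :: real set. uncountable A \<longrightarrow> A \<approx> (UNIV :: real set))"

definition is_ideal :: "'a set \<Rightarrow> 'a set set \<Rightarrow> bool" where
  "is_ideal X I \<longleftrightarrow>
     I \<subseteq> Pow X \<and>
     (\<forall>A\<in>I. \<forall>B. B \<subseteq> A \<longrightarrow> B \<in> I) \<and>
     (\<forall>A\<in>I. \<forall>B\<in>I. A \<union> B \<in> I) \<and>
     (\<forall>F. F \<subseteq> X \<and> finite F \<longrightarrow> F \<in> I) \<and>
     X \<notin> I"

definition ideal_below :: "'a set set \<Rightarrow> 'b set set \<Rightarrow> bool" where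
  "ideal_below I J \<longleftrightarrow>
     (\<exists>f. bij_betw f (\<Union>J) (\<Union>I) \<and> (\<forall>A\<in>I. f -` A \<inter> \<Union>J \<in> J))"

definition Fin2 :: "(nat \<times> nat) set set" where
  "Fin2 = {A. finite {n. infinite {m. (n, m) \<in> A}}}"

definition BI :: "(nat \<times> nat \<times> nat) set set" where
  "BI = {A. \<exists>k. (\<forall>i<k. {(j, l). (i, j, l) \<in> A} \<in> Fin2) \<and>
                 (\<forall>i\<ge>k. finite {(j, l). (i, j, l) \<in> A})}"

definition unboring :: "'a set set \<Rightarrow> bool" where
  "unboring I \<longleftrightarrow> \<not> ideal_below BI I"

definition FinBW :: "'b topology \<Rightarrow> 'a set set \<Rightarrow> bool" where
  "FinBW T I \<longleftrightarrow> Hausdorff_space T \<and>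
     (\<forall>x. (\<forall>n\<in>\<Union>I. x n \<in> topspace T) \<longrightarrow>
        (\<exists>A. A \<subseteq> \<Union>I \<and> A \<notin> I \<and>
           (\<exists>y\<in>topspace T. \<forall>U. openin T U \<and> y \<in> U \<longrightarrow> finite {n\<in>A. x n \<notin> U})))"

definition almost_disjoint_family :: "nat set set \<Rightarrow> bool" where
  "almost_disjoint_family \<A> \<longleftrightarrow> infinite \<A> \<and> (\<forall>A\<in>\<A>. infinite A) \<and>
     (\<forall>A\<in>\<A>. \<forall>B\<in>\<A>. A \<noteq> B \<longrightarrow> finite (A \<inter> B))"

text \<open>Points of a Mrowka space: elements of omega, elements of the family, and infinity.\<close>
datatype mpoint = Pt nat | Ad "nat set" | Infty

definition mrowka_carrier :: "nat set set \<Rightarrow> mpoint set" where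
  "mrowka_carrier \<A> = range Pt \<union> Ad ` \<A> \<union> {Infty}"

definition mrowka_basic_nbhd :: "nat set set \<Rightarrow> mpoint \<Rightarrow> mpoint set \<Rightarrow> bool" where
  "mrowka_basic_nbhd \<A> p N \<longleftrightarrow>
     (\<exists>n. p = Pt n \<and> N = {Pt n}) \<or>
     (\<exists>A\<in>\<A>. \<exists>F. finite F \<and> p = Ad A \<and> N = {Ad A} \<union> Pt ` (A - F)) \<or>
     (\<exists>F G. finite F \<and> finite G \<and> G \<subseteq> \<A> \<and> p = Infty \<and>
        N = {Infty} \<union> Ad ` (\<A> - G) \<union> Pt ` (UNIV - (F \<union> \<Union>G)))"

definition Mrowka :: "nat set set \<Rightarrow> mpoint topology" where
  "Mrowka \<A> = topology (\<lambda>U. U \<subseteq> mrowka_carrier \<A> \<and>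
      (\<forall>p\<in>U. \<exists>N. mrowka_basic_nbhd \<A> p N \<and> N \<subseteq> U))"

end

theory Submission
  imports Defs
begin

unbundle cardinal_syntax

lemma CH_wo:
  assumes "CH"
  shows "\<exists>r. Well_order r \<and> Field r = (UNIV::nat set set) \<and> (\<forall>a. countable (underS r a))"
proof -
  let ?r = "|UNIV :: nat set set|"
  have co: "card_order_on UNIV ?r" by (rule card_of_card_order_on)
  have wo: "Well_order ?r" by (rule card_of_Well_order)
  have fld: "Field ?r = UNIV" by (rule Field_card_of)
  have "countable (underS ?r a)" for a
  proof (rule ccontr)
    assume unc: "uncountable (underS ?r a)"
    obtain g :: "nat set \<Rightarrow> real" where g: "bij_betw g UNIV UNIV"
      using nat_sets_eqpoll_reals unfolding eqpoll_def by blast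
    have inj: "inj_on g (underS ?r a)" using g by (meson bij_betw_imp_inj_on inj_on_subset subset_UNIV)
    have "uncountable (g ` underS ?r a)" using unc inj countable_image_inj_on by blast
    hence "g ` underS ?r a \<approx> (UNIV::real set)" using assms unfolding CH_def by simp
    moreover have "underS ?r a \<approx> g ` underS ?r a" using inj by (simp add: inj_on_image_eqpoll_self eqpoll_sym)
    moreover have "(UNIV::real set) \<approx> (UNIV :: nat set set)" using nat_sets_eqpoll_reals eqpoll_sym by auto
    ultimately have "underS ?r a \<approx> (UNIV :: nat set set)" by (meson eqpoll_trans)
    hence "|underS ?r a| =o ?r" using eqpoll_iff_card_of_ordIso by auto
    moreover have "|underS ?r a| <o ?r"
      using card_of_underS[of ?r a] co fld unfolding card_order_on_def by auto
    ultimately show False using not_ordLess_ordIso by metis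
  qed
  thus ?thesis using wo fld by (intro exI[of _ ?r]) simp
qed

abbreviation "mb \<equiv> mrowka_basic_nbhd"

lemma mb_Pt: "mb \<A> (Pt n) N \<longleftrightarrow> N = {Pt n}"
  unfolding mrowka_basic_nbhd_def by auto

lemma mb_Ad: "mb \<A> (Ad A) N \<longleftrightarrow> A \<in> \<A> \<and> (\<exists>F. finite F \<and> N = {Ad A} \<union> Pt ` (A - F))"
  unfolding mrowka_basic_nbhd_def by auto

lemma mb_Infty: "mb \<A> Infty N \<longleftrightarrow> (\<exists>F G. finite F \<and> finite G \<and> G \<subseteq> \<A> \<and>
        N = {Infty} \<union> Ad ` (\<A> - G) \<union> Pt ` (UNIV - (F \<union> \<Union>G)))"
  unfolding mrowka_basic_nbhd_def by auto

lemma mb_inter: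
  assumes "mb \<A> p N1" "mb \<A> p N2"
  shows "\<exists>N. mb \<A> p N \<and> N \<subseteq> N1 \<inter> N2"
proof (cases p)
  case (Pt n) thus ?thesis using assms by (auto simp: mb_Pt)
next
  case (Ad A)
  obtain F1 where "finite F1" "N1 = {Ad A} \<union> Pt ` (A - F1)" "A \<in> \<A>"
    using assms(1) unfolding Ad mb_Ad by (elim conjE exE) simp
  moreover obtain F2 where "finite F2" "N2 = {Ad A} \<union> Pt ` (A - F2)"
    using assms(2) unfolding Ad mb_Ad by (elim conjE exE) simp
  ultimately have F: "finite F1" "finite F2" "N1 = {Ad A} \<union> Pt ` (A - F1)" "N2 = {Ad A} \<union> Pt ` (A - F2)" "A \<in> \<A>"
    by auto
  have "mb \<A> p ({Ad A} \<union> Pt ` (A - (F1 \<union> F2)))" unfolding Ad mb_Ad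
    apply (rule conjI, rule F(5)) apply (rule exI[of _ "F1 \<union> F2"]) using F by simp
  moreover have "{Ad A} \<union> Pt ` (A - (F1 \<union> F2)) \<subseteq> N1 \<inter> N2" unfolding F(3,4) by (intro Int_greatest Un_mono image_mono Diff_mono) auto
  ultimately show ?thesis by (intro exI conjI)
next
  case Infty
  obtain F1 G1 where "finite F1" "finite G1" "G1 \<subseteq> \<A>"
    "N1 = {Infty} \<union> Ad ` (\<A> - G1) \<union> Pt ` (UNIV - (F1 \<union> \<Union>G1))"
    using assms(1) unfolding Infty mb_Infty by (elim conjE exE) simp
  moreover obtain F2 G2 where "finite F2" "finite G2" "G2 \<subseteq> \<A>"
    "N2 = {Infty} \<union> Ad ` (\<A> - G2) \<union> Pt ` (UNIV - (F2 \<union> \<Union>G2))"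
    using assms(2) unfolding Infty mb_Infty by (elim conjE exE) simp
  ultimately have F: "finite F1" "finite G1" "G1 \<subseteq> \<A>" "finite F2" "finite G2" "G2 \<subseteq> \<A>"
    "N1 = {Infty} \<union> Ad ` (\<A> - G1) \<union> Pt ` (UNIV - (F1 \<union> \<Union>G1))"
    "N2 = {Infty} \<union> Ad ` (\<A> - G2) \<union> Pt ` (UNIV - (F2 \<union> \<Union>G2))" by auto
  let ?N = "{Infty} \<union> Ad ` (\<A> - (G1 \<union> G2)) \<union> Pt ` (UNIV - ((F1 \<union> F2) \<union> \<Union>(G1 \<union> G2)))"
  have "finite (F1 \<union> F2)" "finite (G1 \<union> G2)" "G1 \<union> G2 \<subseteq> \<A>" using F by auto
  hence "mb \<A> p ?N" unfolding Infty mb_Infty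
    apply - apply (rule exI[of _ "F1 \<union> F2"], rule exI[of _ "G1 \<union> G2"]) by simp
  moreover have "?N \<subseteq> N1 \<inter> N2" unfolding F(7,8) by (intro Int_greatest Un_mono image_mono Diff_mono) auto
  ultimately show ?thesis by (intro exI conjI)
qed

lemma mb_sub: "mb \<A> p N \<Longrightarrow> p \<in> N \<and> N \<subseteq> mrowka_carrier \<A>"
  unfolding mrowka_basic_nbhd_def mrowka_carrier_def by auto

lemma istop_M: "istopology (\<lambda>U. U \<subseteq> mrowka_carrier \<A> \<and> (\<forall>p\<in>U. \<exists>N. mb \<A> p N \<and> N \<subseteq> U))"
proof -
  have 1: "S \<inter> T \<subseteq> mrowka_carrier \<A> \<and> (\<forall>p\<in>S \<inter> T. \<exists>N. mb \<A> p N \<and> N \<subseteq> S \<inter> T)"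
    if S: "S \<subseteq> mrowka_carrier \<A> \<and> (\<forall>p\<in>S. \<exists>N. mb \<A> p N \<and> N \<subseteq> S)"
    and T: "T \<subseteq> mrowka_carrier \<A> \<and> (\<forall>p\<in>T. \<exists>N. mb \<A> p N \<and> N \<subseteq> T)" for S T
  proof -
    have "\<exists>N. mb \<A> p N \<and> N \<subseteq> S \<inter> T" if "p \<in> S \<inter> T" for p
    proof -
      from that have pS: "p \<in> S" and pT: "p \<in> T" by auto
      obtain N1 where N1: "mb \<A> p N1" "N1 \<subseteq> S" using S[THEN conjunct2, rule_format, OF pS] by (elim exE conjE)
      obtain N2 where N2: "mb \<A> p N2" "N2 \<subseteq> T" using T[THEN conjunct2, rule_format, OF pT] by (elim exE conjE)
      obtain N where "mb \<A> p N" "N \<subseteq> N1 \<inter> N2" using mb_inter[OF N1(1) N2(1)] by (elim exE conjE)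
      hence "mb \<A> p N \<and> N \<subseteq> S \<inter> T" using N1 N2 by auto
      thus ?thesis by (rule exI)
    qed
    moreover have "S \<inter> T \<subseteq> mrowka_carrier \<A>" using S by auto
    ultimately show ?thesis by (intro conjI ballI)
  qed
  have 2: "\<Union> K \<subseteq> mrowka_carrier \<A> \<and> (\<forall>p\<in>\<Union> K. \<exists>N. mb \<A> p N \<and> N \<subseteq> \<Union> K)"
    if K: "\<forall>U\<in>K. U \<subseteq> mrowka_carrier \<A> \<and> (\<forall>p\<in>U. \<exists>N. mb \<A> p N \<and> N \<subseteq> U)" for K
  proof -
    have "\<exists>N. mb \<A> p N \<and> N \<subseteq> \<Union> K" if pK: "p \<in> \<Union>K" for p
    proof -
      obtain U where U: "U \<in> K" "p \<in> U" using pK by auto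
      obtain N where "mb \<A> p N" "N \<subseteq> U" using K[rule_format, OF U(1), THEN conjunct2, rule_format, OF U(2)] by (elim exE conjE)
      hence "mb \<A> p N \<and> N \<subseteq> \<Union>K" using U by auto
      thus ?thesis by (rule exI)
    qed
    moreover have "\<Union> K \<subseteq> mrowka_carrier \<A>" using K by auto
    ultimately show ?thesis by (intro conjI ballI)
  qed
  show ?thesis unfolding istopology_def
    apply (rule conjI)
     apply (intro allI impI)
     apply (erule (1) 1)
    apply (intro allI impI)
    apply (erule 2)
    done
qed

lemma openin_M: "openin (Mrowka \<A>) U \<longleftrightarrow> U \<subseteq> mrowka_carrier \<A> \<and> (\<forall>p\<in>U. \<exists>N. mb \<A> p N \<and> N \<subseteq> U)"
  unfolding Mrowka_def using istop_M[of \<A>] by simp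

lemma mb_exists: "p \<in> mrowka_carrier \<A> \<Longrightarrow> \<exists>N. mb \<A> p N"
proof (cases p)
  case (Pt n) thus ?thesis by (simp add: mb_Pt)
next
  case (Ad A)
  assume "p \<in> mrowka_carrier \<A>"
  hence "A \<in> \<A>" using Ad unfolding mrowka_carrier_def by auto
  have "mb \<A> p ({Ad A} \<union> Pt ` (A - {}))" using \<open>A \<in> \<A>\<close> unfolding Ad mb_Ad by (intro conjI exI[of _ "{}"]) simp_all
  thus ?thesis by blast
next
  case Infty
  have "mb \<A> p ({Infty} \<union> Ad ` (\<A> - {}) \<union> Pt ` (UNIV - ({} \<union> \<Union>{})))" unfolding Infty mb_Infty
    by (intro conjI exI[of _ "{}"]) simp_all
  thus ?thesis by blast
qed

lemma topspace_M: "topspace (Mrowka \<A>) = mrowka_carrier \<A>"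
proof -
  have "\<exists>N. mb \<A> p N \<and> N \<subseteq> mrowka_carrier \<A>" if pc: "p \<in> mrowka_carrier \<A>" for p
  proof -
    obtain N where "mb \<A> p N" using mb_exists[OF pc] by (elim exE)
    thus ?thesis using mb_sub[of \<A> p N] by auto
  qed
  hence "openin (Mrowka \<A>) (mrowka_carrier \<A>)"
    unfolding openin_M by auto
  moreover have "\<And>U. openin (Mrowka \<A>) U \<Longrightarrow> U \<subseteq> mrowka_carrier \<A>" unfolding openin_M by auto
  ultimately show ?thesis unfolding topspace_def by auto
qed

lemma mb_PtI: "mb \<A> (Pt n) {Pt n}" by (simp add: mb_Pt)

lemma mb_AdI: "A \<in> \<A> \<Longrightarrow> finite F \<Longrightarrow> mb \<A> (Ad A) ({Ad A} \<union> Pt ` (A - F))"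
  unfolding mb_Ad by (intro conjI exI[of _ F]) simp_all

lemma mb_InftyI: "finite F \<Longrightarrow> finite G \<Longrightarrow> G \<subseteq> \<A> \<Longrightarrow>
   mb \<A> Infty ({Infty} \<union> Ad ` (\<A> - G) \<union> Pt ` (UNIV - (F \<union> \<Union>G)))"
  unfolding mb_Infty by (intro conjI exI[of _ F] exI[of _ G]) simp_all

definition ad :: "nat set set \<Rightarrow> bool" where
  "ad \<A> \<longleftrightarrow> (\<forall>A\<in>\<A>. \<forall>B\<in>\<A>. A \<noteq> B \<longrightarrow> finite (A \<inter> B))"

lemma mb_open:
  assumes "ad \<A>" "mb \<A> p N"
  shows "openin (Mrowka \<A>) N"
  unfolding openin_M
proof (intro conjI ballI)
  show "N \<subseteq> mrowka_carrier \<A>" using mb_sub assms by blast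
  fix q assume q: "q \<in> N"
  show "\<exists>N'. mb \<A> q N' \<and> N' \<subseteq> N"
  proof (cases q)
    case (Pt m) thus ?thesis using q mb_PtI by blast
  next
    case (Ad B)
    show ?thesis
    proof (cases p)
      case (Pt n) 
      hence "N = {Pt n}" using assms by (simp add: mb_Pt)
      thus ?thesis using q Ad by simp
    next
      case (Ad A)
      then obtain F where "N = {Ad A} \<union> Pt ` (A - F)" using assms by (auto simp: mb_Ad)
      hence "q = p" using q \<open>q = Ad B\<close> Ad by auto
      thus ?thesis using assms(2) by blast
    next
      case Infty
      obtain F G where FG: "finite F" "finite G" "G \<subseteq> \<A>"
        "N = {Infty} \<union> Ad ` (\<A> - G) \<union> Pt ` (UNIV - (F \<union> \<Union>G))"
        using assms(2) unfolding Infty mb_Infty by (elim exE conjE) simp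
      hence B: "B \<in> \<A>" "B \<notin> G" using q Ad by auto
      have "finite (B \<inter> \<Union>G)"
      proof -
        have eq: "B \<inter> \<Union>G = (\<Union>C\<in>G. B \<inter> C)" by auto
        have fin: "finite (B \<inter> C)" if "C \<in> G" for C 
          using assms(1) B FG(3) that unfolding ad_def by (metis subsetD)
        have "finite (\<Union>C\<in>G. B \<inter> C)" using FG(2) fin by (intro finite_UN_I)
        thus ?thesis by (simp only: eq)
      qed
      hence "mb \<A> q ({Ad B} \<union> Pt ` (B - (F \<union> (B \<inter> \<Union>G))))" 
        unfolding Ad using B FG \<open>finite (B \<inter> \<Union>G)\<close> by (intro mb_AdI) auto
      moreover have "{Ad B} \<union> Pt ` (B - (F \<union> (B \<inter> \<Union>G))) \<subseteq> N" using FG B by auto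
      ultimately show ?thesis by blast
    qed
  next
    case Infty
    then have "p = Infty" using assms q unfolding mrowka_basic_nbhd_def by auto
    thus ?thesis using assms Infty by blast
  qed
qed

lemma mb_sep:
  assumes "ad \<A>" "mb \<A> x N1" "mb \<A> y N2" "N1 \<inter> N2 = {}"
  shows "\<exists>U V. openin (Mrowka \<A>) U \<and> openin (Mrowka \<A>) V \<and> x \<in> U \<and> y \<in> V \<and> disjnt U V"
proof -
  have "openin (Mrowka \<A>) N1 \<and> openin (Mrowka \<A>) N2 \<and> x \<in> N1 \<and> y \<in> N2 \<and> disjnt N1 N2"
    using assms mb_open[OF assms(1)] mb_sub unfolding disjnt_def by simp
  thus ?thesis by (intro exI)
qed

lemma Hausdorff_M:
  assumes "ad \<A>"
  shows "Hausdorff_space (Mrowka \<A>)"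
  unfolding Hausdorff_space_def topspace_M
proof (intro allI impI)
  fix x y assume xy: "x \<in> mrowka_carrier \<A> \<and> y \<in> mrowka_carrier \<A> \<and> x \<noteq> y"
  note S = mb_sep[OF assms]
  show "\<exists>U V. openin (Mrowka \<A>) U \<and> openin (Mrowka \<A>) V \<and> x \<in> U \<and> y \<in> V \<and> disjnt U V"
  proof (cases x)
    case (Pt n)
    have X: "mb \<A> x {Pt n}" using Pt by (simp add: mb_Pt)
    show ?thesis
    proof (cases y)
      case (Pt m) 
      have "{Pt n} \<inter> {Pt m} = {}" using xy \<open>x = Pt n\<close> Pt by auto
      thus ?thesis using S[OF X, of y "{Pt m}"] Pt mb_PtI by blast
    next
      case (Ad B)
      hence "B \<in> \<A>" using xy unfolding mrowka_carrier_def by auto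
      hence Y: "mb \<A> y ({Ad B} \<union> Pt ` (B - {n}))" using Ad mb_AdI by blast
      have "{Pt n} \<inter> ({Ad B} \<union> Pt ` (B - {n})) = {}" by auto
      thus ?thesis using S[OF X Y] by blast
    next
      case Infty
      have Y: "mb \<A> y ({Infty} \<union> Ad ` (\<A> - {}) \<union> Pt ` (UNIV - ({n} \<union> \<Union>{})))"
        unfolding Infty by (rule mb_InftyI) auto
      have "{Pt n} \<inter> ({Infty} \<union> Ad ` (\<A> - {}) \<union> Pt ` (UNIV - ({n} \<union> \<Union>{}))) = {}" by auto
      thus ?thesis using S[OF X Y] by blast
    qed
  next
    case (Ad A)
    hence A: "A \<in> \<A>" using xy unfolding mrowka_carrier_def by auto
    show ?thesis
    proof (cases y)
      case (Pt m)
      have X: "mb \<A> x ({Ad A} \<union> Pt ` (A - {m}))" using Ad A mb_AdI by blast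
      have Y: "mb \<A> y {Pt m}" using Pt by (simp add: mb_Pt)
      have "({Ad A} \<union> Pt ` (A - {m})) \<inter> {Pt m} = {}" by auto
      thus ?thesis using S[OF X Y] by blast
    next
      case (Ad B)
      hence B: "B \<in> \<A>" "A \<noteq> B" using xy \<open>x = Ad A\<close> unfolding mrowka_carrier_def by auto
      hence fin: "finite (A \<inter> B)" using assms A unfolding ad_def by blast
      have X: "mb \<A> x ({Ad A} \<union> Pt ` (A - (A \<inter> B)))" using \<open>x = Ad A\<close> A fin mb_AdI by blast
      have Y: "mb \<A> y ({Ad B} \<union> Pt ` (B - (A \<inter> B)))" using Ad B fin mb_AdI by blast
      have "({Ad A} \<union> Pt ` (A - (A \<inter> B))) \<inter> ({Ad B} \<union> Pt ` (B - (A \<inter> B))) = {}" using B(2) by auto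
      thus ?thesis using S[OF X Y] by blast
    next
      case Infty
      have X: "mb \<A> x ({Ad A} \<union> Pt ` (A - {}))" using \<open>x = Ad A\<close> A mb_AdI by blast
      have Y: "mb \<A> y ({Infty} \<union> Ad ` (\<A> - {A}) \<union> Pt ` (UNIV - ({} \<union> \<Union>{A})))"
        unfolding Infty by (rule mb_InftyI) (auto simp: A)
      have "({Ad A} \<union> Pt ` (A - {})) \<inter> ({Infty} \<union> Ad ` (\<A> - {A}) \<union> Pt ` (UNIV - ({} \<union> \<Union>{A}))) = {}" by auto
      thus ?thesis using S[OF X Y] by blast
    qed
  next
    case Infty
    show ?thesis
    proof (cases y)
      case (Pt m)
      have X: "mb \<A> x ({Infty} \<union> Ad ` (\<A> - {}) \<union> Pt ` (UNIV - ({m} \<union> \<Union>{})))"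
        unfolding Infty by (rule mb_InftyI) auto
      have Y: "mb \<A> y {Pt m}" using Pt by (simp add: mb_Pt)
      have "({Infty} \<union> Ad ` (\<A> - {}) \<union> Pt ` (UNIV - ({m} \<union> \<Union>{}))) \<inter> {Pt m} = {}" by auto
      thus ?thesis using S[OF X Y] by blast
    next
      case (Ad B)
      hence B: "B \<in> \<A>" using xy unfolding mrowka_carrier_def by auto
      have X: "mb \<A> x ({Infty} \<union> Ad ` (\<A> - {B}) \<union> Pt ` (UNIV - ({} \<union> \<Union>{B})))"
        unfolding Infty by (rule mb_InftyI) (auto simp: B)
      have Y: "mb \<A> y ({Ad B} \<union> Pt ` (B - {}))" using Ad B mb_AdI by blast
      have "({Infty} \<union> Ad ` (\<A> - {B}) \<union> Pt ` (UNIV - ({} \<union> \<Union>{B}))) \<inter> ({Ad B} \<union> Pt ` (B - {})) = {}" by auto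
      thus ?thesis using S[OF X Y] by blast
    next
      case Infty thus ?thesis using xy \<open>x = Infty\<close> by simp
    qed
  qed
qed

definition conv :: "'b topology \<Rightarrow> ('a \<Rightarrow> 'b) \<Rightarrow> 'a set \<Rightarrow> 'b \<Rightarrow> bool" where
  "conv T x A y \<longleftrightarrow> (\<forall>U. openin T U \<and> y \<in> U \<longrightarrow> finite {n\<in>A. x n \<notin> U})"

lemma conv_const: assumes "\<And>n. n \<in> A \<Longrightarrow> x n = y" shows "conv T x A y"
proof -
  have "{n\<in>A. x n \<notin> U} = {}" if "y \<in> U" for U using assms that by auto
  thus ?thesis unfolding conv_def by (metis finite.emptyI)
qed

lemma conv_Ad:
  assumes C: "C \<in> \<A>" and A: "\<And>n. n \<in> A \<Longrightarrow> x n \<in> Pt ` C"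
    and fin: "\<And>m. finite {n\<in>A. x n = Pt m}"
  shows "conv (Mrowka \<A>) x A (Ad C)"
  unfolding conv_def
proof (intro allI impI)
  fix U assume U: "openin (Mrowka \<A>) U \<and> Ad C \<in> U"
  obtain N where N: "mb \<A> (Ad C) N" "N \<subseteq> U" using U unfolding openin_M by blast
  obtain F where F: "finite F" "N = {Ad C} \<union> Pt ` (C - F)" using N(1) unfolding mb_Ad by (elim conjE exE) simp
  have "{n\<in>A. x n \<notin> U} \<subseteq> (\<Union>m\<in>F. {n\<in>A. x n = Pt m})"
  proof
    fix n assume n: "n \<in> {n\<in>A. x n \<notin> U}"
    then obtain m where m: "m \<in> C" "x n = Pt m" using A by blast
    have "m \<in> F" using n m N(2) F(2) by auto
    thus "n \<in> (\<Union>m\<in>F. {n\<in>A. x n = Pt m})" using n m by auto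
  qed
  moreover have "finite (\<Union>m\<in>F. {n\<in>A. x n = Pt m})" using F(1) fin by (intro finite_UN_I)
  ultimately show "finite {n\<in>A. x n \<notin> U}" by (rule finite_subset)
qed

lemma conv_Infty:
  assumes A: "\<And>n. n \<in> A \<Longrightarrow> x n \<in> Ad ` \<A>"
    and fin: "\<And>E. finite {n\<in>A. x n = Ad E}"
  shows "conv (Mrowka \<A>) x A Infty"
  unfolding conv_def
proof (intro allI impI)
  fix U assume U: "openin (Mrowka \<A>) U \<and> Infty \<in> U"
  obtain N where N: "mb \<A> Infty N" "N \<subseteq> U" using U unfolding openin_M by blast
  obtain F G where F: "finite F" "finite G" "G \<subseteq> \<A>" "N = {Infty} \<union> Ad ` (\<A> - G) \<union> Pt ` (UNIV - (F \<union> \<Union>G))"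
    using N(1) unfolding mb_Infty by (elim conjE exE) simp
  have "{n\<in>A. x n \<notin> U} \<subseteq> (\<Union>E\<in>G. {n\<in>A. x n = Ad E})"
  proof
    fix n assume n: "n \<in> {n\<in>A. x n \<notin> U}"
    then obtain E where E: "E \<in> \<A>" "x n = Ad E" using A by blast
    have "E \<in> G" using n E N(2) F(4) by auto
    thus "n \<in> (\<Union>E\<in>G. {n\<in>A. x n = Ad E})" using n E by auto
  qed
  moreover have "finite (\<Union>E\<in>G. {n\<in>A. x n = Ad E})" using F(2) fin by (intro finite_UN_I)
  ultimately show "finite {n\<in>A. x n \<notin> U}" by (rule finite_subset)
qed

lemma ideal_sub: "is_ideal X I \<Longrightarrow> A \<in> I \<Longrightarrow> B \<subseteq> A \<Longrightarrow> B \<in> I"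
  unfolding is_ideal_def by blast

lemma ideal_Un: "is_ideal X I \<Longrightarrow> A \<in> I \<Longrightarrow> B \<in> I \<Longrightarrow> A \<union> B \<in> I"
  unfolding is_ideal_def by blast

lemma ideal_fin: "is_ideal X I \<Longrightarrow> finite F \<Longrightarrow> F \<subseteq> X \<Longrightarrow> F \<in> I"
  unfolding is_ideal_def by blast

lemma ideal_subX: "is_ideal X I \<Longrightarrow> A \<in> I \<Longrightarrow> A \<subseteq> X"
  unfolding is_ideal_def by blast

lemma ideal_X: "is_ideal X I \<Longrightarrow> X \<notin> I"
  unfolding is_ideal_def by blast

lemma ideal_cover: "is_ideal X I \<Longrightarrow> Z \<subseteq> A \<union> B \<Longrightarrow> A \<in> I \<Longrightarrow> B \<in> I \<Longrightarrow> Z \<in> I"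
  by (meson ideal_Un ideal_sub)

lemma ideal_cover2: "is_ideal X I \<Longrightarrow> Z \<subseteq> A \<union> B \<Longrightarrow> B \<in> I \<Longrightarrow> A \<in> I \<Longrightarrow> Z \<in> I"
  by (meson ideal_Un ideal_sub)

lemma ideal_UN:
  assumes "is_ideal X I" "finite S" "\<And>s. s \<in> S \<Longrightarrow> F s \<in> I"
  shows "(\<Union>s\<in>S. F s) \<in> I"
  using assms(2,3)
proof (induction S rule: finite_induct)
  case empty thus ?case using ideal_fin[OF assms(1)] by simp
next
  case (insert x S) thus ?case using ideal_Un[OF assms(1)] by simp
qed

lemma ideal_Union_eq: "is_ideal X I \<Longrightarrow> \<Union>I = X"
proof -
  assume id: "is_ideal X I"
  have "{x} \<in> I" if "x \<in> X" for x using ideal_fin[OF id, of "{x}"] that by simp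
  thus ?thesis using ideal_subX[OF id] by blast
qed

lemma ideal_pos_infinite: "is_ideal X I \<Longrightarrow> A \<subseteq> X \<Longrightarrow> A \<notin> I \<Longrightarrow> infinite A"
  using ideal_fin by blast

lemma Union_BI: "\<Union>BI = UNIV"
proof -
  have "{x} \<in> BI" for x :: "nat \<times> nat \<times> nat"
  proof -
    have "finite {(j, l). (i, j, l) \<in> {x}}" for i
    proof -
      have "{(j, l). (i, j, l) \<in> {x}} \<subseteq> {snd x}" by auto
      thus ?thesis by (rule finite_subset) simp
    qed
    thus ?thesis unfolding BI_def by (intro CollectI exI[of _ 0]) simp
  qed
  thus ?thesis by blast
qed

lemma nice_boring:
  fixes b p :: "'a \<Rightarrow> nat" and X :: "'a set"
  assumes id: "is_ideal X I" and cX: "countable X"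
    and inf: "\<And>i j. infinite {a\<in>X. b a = i \<and> p a = j}"
    and inI: "\<And>i j. {a\<in>X. b a = i \<and> p a = j} \<in> I"
    and ii: "\<And>i Z. Z \<subseteq> X \<Longrightarrow> (\<forall>a\<in>Z. b a = i) \<Longrightarrow> (\<And>j. finite {a\<in>Z. p a = j}) \<Longrightarrow> Z \<in> I"
    and iii: "\<And>Z. Z \<subseteq> X \<Longrightarrow> (\<And>i. finite {a\<in>Z. b a = i}) \<Longrightarrow> Z \<in> I"
  shows "ideal_below BI I"
proof -
  define F where "F i j = {a\<in>X. b a = i \<and> p a = j}" for i j
  have cF: "countable (F i j)" for i j using cX unfolding F_def by auto
  have iF: "infinite (F i j)" for i j using inf unfolding F_def by auto
  define t where "t a = to_nat_on (F (b a) (p a)) a" for a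
  define f where "f a = (b a, p a, t a)" for a
  have UI: "\<Union>I = X" using ideal_Union_eq[OF id] .
  have inj: "inj_on f X"
  proof (rule inj_onI)
    fix x y assume xy: "x \<in> X" "y \<in> X" "f x = f y"
    hence e: "b x = b y" "p x = p y" "t x = t y" unfolding f_def by auto
    have "x \<in> F (b x) (p x)" "y \<in> F (b x) (p x)" using xy e unfolding F_def by auto
    thus "x = y" using e(3) cF unfolding t_def e by (metis from_nat_into_to_nat_on)
  qed
  have surj: "f ` X = UNIV"
  proof (intro set_eqI iffI)
    fix z :: "nat \<times> nat \<times> nat"
    obtain i j l where z: "z = (i, j, l)" by (cases z) auto
    obtain a where a: "a \<in> F i j" "to_nat_on (F i j) a = l" using to_nat_on_surj[OF cF iF] by blast
    have "a \<in> X" "b a = i" "p a = j" using a unfolding F_def by auto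
    hence "f a = z" using a z unfolding f_def t_def by simp
    thus "z \<in> f ` X" using \<open>a \<in> X\<close> by blast
  qed auto
  have pre: "f -` A \<inter> X \<in> I" if A: "A \<in> BI" for A
  proof -
    obtain k where k1: "\<And>i. i < k \<Longrightarrow> {(j, l). (i, j, l) \<in> A} \<in> Fin2"
      and k2: "\<And>i. i \<ge> k \<Longrightarrow> finite {(j, l). (i, j, l) \<in> A}"
      using A unfolding BI_def by blast
    define Z where "Z = f -` A \<inter> X"
    define Zr where "Zr = {a\<in>Z. b a \<ge> k}"
    define Zi where "Zi i = {a\<in>Z. b a = i}" for i
    have "Z \<subseteq> (\<Union>i\<in>{..<k}. Zi i) \<union> Zr" unfolding Zi_def Zr_def by auto
    moreover have "Zr \<in> I"
    proof (rule iii)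
      show "Zr \<subseteq> X" unfolding Zr_def Z_def by auto
      fix i
      show "finite {a\<in>Zr. b a = i}"
      proof (cases "i \<ge> k")
        case True
        have "(\<lambda>a. (p a, t a)) ` {a\<in>Zr. b a = i} \<subseteq> {(j, l). (i, j, l) \<in> A}"
          unfolding Zr_def Z_def f_def by auto
        hence "finite ((\<lambda>a. (p a, t a)) ` {a\<in>Zr. b a = i})" using k2[OF True] finite_subset by blast
        moreover have "inj_on (\<lambda>a. (p a, t a)) {a\<in>Zr. b a = i}"
          using inj unfolding inj_on_def f_def Zr_def Z_def by auto
        ultimately show ?thesis using finite_imageD by blast
      next
        case False 
        hence "{a\<in>Zr. b a = i} = {}" unfolding Zr_def by auto
        thus ?thesis by (metis finite.emptyI)
      qed
    qed
    moreover have "Zi i \<in> I" if "i < k" for i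
    proof -
      have "{(j, l). (i, j, l) \<in> A} \<in> Fin2" using k1[OF that] .
      hence fJ: "finite {j. infinite {l. (j, l) \<in> {(j, l). (i, j, l) \<in> A}}}" unfolding Fin2_def by simp
      define J where "J = {j. infinite {l. (i, j, l) \<in> A}}"
      have fJ': "finite J" using fJ unfolding J_def by simp
      define Z' where "Z' = {a\<in>Zi i. p a \<notin> J}"
      have "Zi i \<subseteq> (\<Union>j\<in>J. F i j) \<union> Z'" unfolding Z'_def Zi_def F_def Z_def by auto
      moreover have "(\<Union>j\<in>J. F i j) \<in> I" by (rule ideal_UN[OF id fJ']) (simp add: inI F_def)
      moreover have "Z' \<in> I"
      proof (rule ii[of _ i])
        show "Z' \<subseteq> X" unfolding Z'_def Zi_def Z_def by auto
        show "\<forall>a\<in>Z'. b a = i" unfolding Z'_def Zi_def by auto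
        fix j show "finite {a\<in>Z'. p a = j}"
        proof (cases "j \<in> J")
          case True 
          hence "{a\<in>Z'. p a = j} = {}" unfolding Z'_def by auto
          thus ?thesis by (metis finite.emptyI)
        next
          case False
          hence fin: "finite {l. (i, j, l) \<in> A}" unfolding J_def by simp
          have "t ` {a\<in>Z'. p a = j} \<subseteq> {l. (i, j, l) \<in> A}"
            unfolding Z'_def Zi_def Z_def f_def by auto
          hence "finite (t ` {a\<in>Z'. p a = j})" using fin finite_subset by blast
          moreover have "inj_on t {a\<in>Z'. p a = j}"
            using inj unfolding inj_on_def f_def Z'_def Zi_def Z_def by auto
          ultimately show ?thesis using finite_imageD by blast
        qed
      qed
      ultimately show ?thesis by (rule ideal_cover[OF id])
    qed
    hence "(\<Union>i\<in>{..<k}. Zi i) \<in> I" by (intro ideal_UN[OF id]) auto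
    ultimately show ?thesis unfolding Z_def[symmetric] by (rule ideal_cover2[OF id])
  qed
  show ?thesis unfolding ideal_below_def Union_BI UI
  proof (intro exI[of _ f] conjI)
    show "bij_betw f X UNIV" using inj surj unfolding bij_betw_def by simp
    show "\<forall>A\<in>BI. f -` A \<inter> X \<in> I" using pre by blast
  qed
qed

lemma fin_sub_const:
  assumes "finite {a\<in>Z. g a = c}" "\<And>a. a \<in> W \<Longrightarrow> a \<in> Z \<and> g a = c"
  shows "finite W"
proof -
  have "W \<subseteq> {a\<in>Z. g a = c}" using assms(2) by auto
  thus ?thesis using assms(1) finite_subset by blast
qed

lemma boring_crit:
  fixes b p :: "'a \<Rightarrow> nat" and X :: "'a set"
  assumes id: "is_ideal X I" and cX: "countable X"
    and i: "\<And>i j. {a\<in>X. b a = i \<and> p a = j} \<in> I"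
    and ii: "\<And>i Z. Z \<subseteq> X \<Longrightarrow> (\<forall>a\<in>Z. b a = i) \<Longrightarrow> (\<And>j. finite {a\<in>Z. p a = j}) \<Longrightarrow> Z \<in> I"
    and iii: "\<And>Z. Z \<subseteq> X \<Longrightarrow> (\<And>i. finite {a\<in>Z. b a = i}) \<Longrightarrow> Z \<in> I"
  shows "ideal_below BI I"
proof -
  define B where "B i = {a\<in>X. b a = i}" for i
  define rich where "rich i \<longleftrightarrow> B i \<notin> I" for i
  define u where "u a = (b a, if rich (b a) then p a else 0)" for a
  define U where "U v = {a\<in>X. u a = v}" for v
  have UI: "U v \<in> I" for v
  proof (cases v)
    case (Pair i j)
    show ?thesis
    proof (cases "rich i")
      case True
      hence "U v = {a\<in>X. b a = i \<and> p a = j}" unfolding U_def u_def Pair by auto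
      thus ?thesis using i by simp
    next
      case False
      hence "B i \<in> I" unfolding rich_def by simp
      moreover have "U v \<subseteq> B i" unfolding U_def u_def B_def Pair by auto
      ultimately show ?thesis using ideal_sub[OF id] by blast
    qed
  qed
  have K: "Z \<in> I" if Z: "Z \<subseteq> X" and fu: "\<And>v. finite {a\<in>Z. u a = v}"
    and fr: "finite {i. rich i \<and> infinite {a\<in>Z. b a = i}}" for Z
  proof -
    define R0 where "R0 = {i. rich i \<and> infinite {a\<in>Z. b a = i}}"
    have "Z \<subseteq> (\<Union>i\<in>R0. {a\<in>Z. b a = i}) \<union> {a\<in>Z. b a \<notin> R0}" by auto
    moreover have "(\<Union>i\<in>R0. {a\<in>Z. b a = i}) \<in> I"
    proof (rule ideal_UN[OF id])
      show "finite R0" using fr unfolding R0_def .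
      fix i assume "i \<in> R0"
      hence ri: "rich i" unfolding R0_def by simp
      show "{a\<in>Z. b a = i} \<in> I"
      proof (rule ii[of _ i])
        show "{a\<in>Z. b a = i} \<subseteq> X" using Z by auto
        show "\<forall>a\<in>{a\<in>Z. b a = i}. b a = i" by simp
        fix j
        show "finite {a\<in>{a\<in>Z. b a = i}. p a = j}"
          using fu[of "(i,j)"] by (rule fin_sub_const) (auto simp: u_def ri)
      qed
    qed
    moreover have "{a\<in>Z. b a \<notin> R0} \<in> I"
    proof (rule iii)
      show "{a\<in>Z. b a \<notin> R0} \<subseteq> X" using Z by auto
      fix i
      show "finite {a\<in>{a\<in>Z. b a \<notin> R0}. b a = i}"
      proof (cases "rich i")
        case True
        show ?thesis
        proof (cases "i \<in> R0")
          case True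
          hence "{a\<in>{a\<in>Z. b a \<notin> R0}. b a = i} = {}" by auto
          thus ?thesis by (metis finite.emptyI)
        next
          case False
          hence "finite {a\<in>Z. b a = i}" using \<open>rich i\<close> unfolding R0_def by simp
          thus ?thesis by (rule fin_sub_const) auto
        qed
      next
        case False
        show ?thesis using fu[of "(i,0)"] by (rule fin_sub_const) (auto simp: u_def False)
      qed
    qed
    ultimately show ?thesis by (rule ideal_cover[OF id])
  qed
  show ?thesis
  proof (cases "finite {i. rich i}")
    case True
    have Kf: "Z \<in> I" if Z: "Z \<subseteq> X" and fu: "\<And>v. finite {a\<in>Z. u a = v}" for Z
    proof -
      have "{i. rich i \<and> infinite {a\<in>Z. b a = i}} \<subseteq> {i. rich i}" by auto
      hence "finite {i. rich i \<and> infinite {a\<in>Z. b a = i}}" using True finite_subset by blast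
      thus ?thesis using K[OF Z fu] by simp
    qed
    define V where "V = {v. infinite (U v)}"
    define S where "S = {a\<in>X. u a \<notin> V}"
    have SI: "S \<in> I"
    proof (rule Kf)
      show "S \<subseteq> X" unfolding S_def by auto
      fix v show "finite {a\<in>S. u a = v}"
      proof (cases "v \<in> V")
        case True
        hence "{a\<in>S. u a = v} = {}" unfolding S_def by auto
        thus ?thesis by (metis finite.emptyI)
      next
        case False
        hence "finite (U v)" unfolding V_def by simp
        moreover have "{a\<in>S. u a = v} \<subseteq> U v" unfolding S_def U_def by auto
        ultimately show ?thesis using finite_subset by blast
      qed
    qed
    have infV: "infinite V"
    proof
      assume fV: "finite V"
      have "X \<subseteq> (\<Union>v\<in>V. U v) \<union> S" unfolding S_def U_def by auto
      moreover have "(\<Union>v\<in>V. U v) \<in> I" using ideal_UN[OF id fV] UI by blast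
      ultimately have "X \<in> I" using SI by (rule ideal_cover[OF id])
      thus False using ideal_X[OF id] by simp
    qed
    have cV: "countable V" by simp
    define c where "c a = (if u a \<in> V then prod_decode (to_nat_on V (u a)) else (0,0))" for a
    define b' where "b' a = fst (c a)" for a
    define p' where "p' a = snd (c a)" for a
    have cfib: "{a\<in>X. b' a = k \<and> p' a = l} = {a\<in>X. c a = (k,l)}" for k l
      unfolding b'_def p'_def by (auto simp: prod_eq_iff)
    define e where "e k l = from_nat_into V (prod_encode (k,l))" for k l
    have "V \<noteq> {}" using infV by auto
    hence eV: "e k l \<in> V" for k l unfolding e_def by (rule from_nat_into)
    have ce: "c a = (k,l) \<longleftrightarrow> u a = e k l" if "u a \<in> V" for a k l
    proof
      assume "c a = (k,l)"
      hence "prod_encode (prod_decode (to_nat_on V (u a))) = prod_encode (k,l)" using that unfolding c_def by simp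
      hence "to_nat_on V (u a) = prod_encode (k,l)" by (simp only: prod_decode_inverse)
      hence "from_nat_into V (to_nat_on V (u a)) = e k l" unfolding e_def by simp
      thus "u a = e k l" using that cV by simp
    next
      assume "u a = e k l"
      hence "to_nat_on V (u a) = prod_encode (k,l)" unfolding e_def using infV cV
        by (simp add: to_nat_on_from_nat_into_infinite)
      thus "c a = (k,l)" using that unfolding c_def by simp
    qed
    show ?thesis
    proof (rule nice_boring[OF id cX, of b' p'])
      fix k l
      have "U (e k l) \<subseteq> {a\<in>X. b' a = k \<and> p' a = l}" unfolding cfib U_def using ce eV by auto
      moreover have "infinite (U (e k l))" using eV unfolding V_def by simp
      ultimately show "infinite {a\<in>X. b' a = k \<and> p' a = l}" using finite_subset by blast
      have "{a\<in>X. b' a = k \<and> p' a = l} \<subseteq> U (e k l) \<union> S" unfolding cfib U_def S_def using ce by auto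
      thus "{a\<in>X. b' a = k \<and> p' a = l} \<in> I" using UI SI by (rule ideal_cover[OF id])
    next
      fix k Z assume Z: "Z \<subseteq> X" "\<forall>a\<in>Z. b' a = k" and fp: "\<And>l. finite {a\<in>Z. p' a = l}"
      show "Z \<in> I"
      proof (rule Kf[OF Z(1)])
        fix v show "finite {a\<in>Z. u a = v}"
        proof (cases "v \<in> V")
          case True
          show ?thesis using fp[of "p' (SOME a. a \<in> Z \<and> u a = v)"]
          proof (rule fin_sub_const)
            fix a assume "a \<in> {a\<in>Z. u a = v}"
            hence a: "a \<in> Z" "u a = v" by auto
            hence ex: "\<exists>a. a \<in> Z \<and> u a = v" by blast
            let ?a = "SOME a. a \<in> Z \<and> u a = v"
            have "?a \<in> Z \<and> u ?a = v" using someI_ex[OF ex] .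
            thus "a \<in> Z \<and> p' a = p' ?a" using a unfolding p'_def c_def by simp
          qed
        next
          case False
          hence "finite (U v)" unfolding V_def by simp
          moreover have "{a\<in>Z. u a = v} \<subseteq> U v" unfolding U_def using Z by auto
          ultimately show ?thesis using finite_subset by blast
        qed
      qed
    next
      fix Z assume Z: "Z \<subseteq> X" and fb: "\<And>k. finite {a\<in>Z. b' a = k}"
      show "Z \<in> I"
      proof (rule Kf[OF Z])
        fix v show "finite {a\<in>Z. u a = v}"
        proof (cases "v \<in> V")
          case True
          show ?thesis using fb[of "b' (SOME a. a \<in> Z \<and> u a = v)"]
          proof (rule fin_sub_const)
            fix a assume "a \<in> {a\<in>Z. u a = v}"
            hence a: "a \<in> Z" "u a = v" by auto
            hence ex: "\<exists>a. a \<in> Z \<and> u a = v" by blast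
            let ?a = "SOME a. a \<in> Z \<and> u a = v"
            have "?a \<in> Z \<and> u ?a = v" using someI_ex[OF ex] .
            thus "a \<in> Z \<and> b' a = b' ?a" using a unfolding b'_def c_def by simp
          qed
        next
          case False
          hence "finite (U v)" unfolding V_def by simp
          moreover have "{a\<in>Z. u a = v} \<subseteq> U v" unfolding U_def using Z by auto
          ultimately show ?thesis using finite_subset by blast
        qed
      qed
    qed
  next
    case False
    define R where "R = {i. rich i}"
    have infR: "infinite R" using False unfolding R_def .
    have cR: "countable R" by simp
    define J where "J i = {j. infinite (U (i,j))}" for i
    define Q where "Q i = {a\<in>B i. p a \<notin> J i}" for i
    have QI: "Q i \<in> I" if ri: "rich i" for i
    proof (rule ii[of _ i])
      show "Q i \<subseteq> X" unfolding Q_def B_def by auto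
      show "\<forall>a\<in>Q i. b a = i" unfolding Q_def B_def by auto
      fix j show "finite {a\<in>Q i. p a = j}"
      proof (cases "j \<in> J i")
        case True
        hence "{a\<in>Q i. p a = j} = {}" unfolding Q_def by auto
        thus ?thesis by (metis finite.emptyI)
      next
        case False
        hence "finite (U (i,j))" unfolding J_def by simp
        moreover have "{a\<in>Q i. p a = j} \<subseteq> U (i,j)" unfolding Q_def B_def U_def u_def using ri by auto
        ultimately show ?thesis using finite_subset by blast
      qed
    qed
    have infJ: "infinite (J i)" if ri: "rich i" for i
    proof
      assume fJ: "finite (J i)"
      have "B i \<subseteq> (\<Union>j\<in>J i. U (i,j)) \<union> Q i" unfolding B_def Q_def U_def u_def using ri by auto
      moreover have "(\<Union>j\<in>J i. U (i,j)) \<in> I" by (rule ideal_UN[OF id fJ]) (rule UI)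
      ultimately have "B i \<in> I" using QI[OF ri] by (rule ideal_cover[OF id])
      thus False using ri unfolding rich_def by simp
    qed
    have cJ: "countable (J i)" for i by simp
    define b' where "b' a = (if rich (b a) then to_nat_on R (b a) else 0)" for a
    define p' where "p' a = (if rich (b a) then (if p a \<in> J (b a) then to_nat_on (J (b a)) (p a) else 0) else b a)" for a
    define r where "r k = from_nat_into R k" for k
    define q where "q i l = from_nat_into (J i) l" for i l
    have Rne: "R \<noteq> {}" using infR by auto
    have rR: "r k \<in> R" for k unfolding r_def using from_nat_into[OF Rne] .
    have rich_r: "rich (r k)" for k using rR unfolding R_def by simp
    have tr: "to_nat_on R (r k) = k" for k unfolding r_def using cR infR by simp
    have rt: "i \<in> R \<Longrightarrow> r (to_nat_on R i) = i" for i unfolding r_def using cR by simp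
    have qJ: "q i l \<in> J i" if "rich i" for i l
    proof -
      have "J i \<noteq> {}" using infJ[OF that] by auto
      thus ?thesis unfolding q_def by (rule from_nat_into)
    qed
    have tq: "to_nat_on (J i) (q i l) = l" if "rich i" for i l
      unfolding q_def using cJ infJ[OF that] by simp
    have qt: "j \<in> J i \<Longrightarrow> q i (to_nat_on (J i) j) = j" for i j unfolding q_def using cJ by simp
    define N where "N l = {a\<in>X. \<not> rich (b a) \<and> b a = l}" for l
    have NI: "N l \<in> I" for l
    proof (cases "rich l")
      case True
      hence "N l = {}" unfolding N_def by auto
      thus ?thesis using ideal_fin[OF id] by simp
    next
      case False
      hence "B l \<in> I" unfolding rich_def by simp
      moreover have "N l \<subseteq> B l" unfolding N_def B_def by auto
      ultimately show ?thesis using ideal_sub[OF id] by blast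
    qed
    show ?thesis
    proof (rule nice_boring[OF id cX, of b' p'])
      fix k l
      have sub1: "U (r k, q (r k) l) \<subseteq> {a\<in>X. b' a = k \<and> p' a = l}"
      proof
        fix a assume "a \<in> U (r k, q (r k) l)"
        hence a: "a \<in> X" "b a = r k" "p a = q (r k) l" unfolding U_def u_def using rich_r by auto
        thus "a \<in> {a\<in>X. b' a = k \<and> p' a = l}"
          unfolding b'_def p'_def using rich_r tr tq qJ by simp
      qed
      moreover have "infinite (U (r k, q (r k) l))" using qJ[OF rich_r] unfolding J_def by simp
      ultimately show "infinite {a\<in>X. b' a = k \<and> p' a = l}" using finite_subset by blast
      have "{a\<in>X. b' a = k \<and> p' a = l} \<subseteq> U (r k, q (r k) l) \<union> (Q (r k) \<union> N l)"
      proof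
        fix a assume a: "a \<in> {a\<in>X. b' a = k \<and> p' a = l}"
        show "a \<in> U (r k, q (r k) l) \<union> (Q (r k) \<union> N l)"
        proof (cases "rich (b a)")
          case True
          hence "to_nat_on R (b a) = k" using a unfolding b'_def by simp
          hence ba: "b a = r k" using rt[of "b a"] True unfolding R_def by auto
          show ?thesis
          proof (cases "p a \<in> J (b a)")
            case True
            hence "to_nat_on (J (b a)) (p a) = l" using a \<open>rich (b a)\<close> unfolding p'_def by simp
            hence "p a = q (r k) l" using qt[OF True] ba by simp
            thus ?thesis using a ba \<open>rich (b a)\<close> unfolding U_def u_def by auto
          next
            case False thus ?thesis using a ba unfolding Q_def B_def by auto
          qed
        next
          case False
          hence "b a = l" using a unfolding p'_def by simp
          thus ?thesis using a False unfolding N_def by auto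
        qed
      qed
      moreover have "Q (r k) \<union> N l \<in> I" using QI[OF rich_r] NI by (rule ideal_Un[OF id])
      ultimately show "{a\<in>X. b' a = k \<and> p' a = l} \<in> I" using UI by (rule ideal_cover2[OF id])
    next
      fix k Z assume Z: "Z \<subseteq> X" "\<forall>a\<in>Z. b' a = k" and fp: "\<And>l. finite {a\<in>Z. p' a = l}"
      show "Z \<in> I"
      proof (rule K[OF Z(1)])
        fix v show "finite {a\<in>Z. u a = v}"
        proof (cases v)
          case (Pair i j)
          show ?thesis
          proof (cases "rich i")
            case ri: True
            show ?thesis
            proof (cases "j \<in> J i")
              case True
              show ?thesis using fp[of "to_nat_on (J i) j"]
              proof (rule fin_sub_const)
                fix a assume "a \<in> {a\<in>Z. u a = v}"
                hence "a \<in> Z" "b a = i" "p a = j" using ri unfolding Pair u_def by auto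
                thus "a \<in> Z \<and> p' a = to_nat_on (J i) j" unfolding p'_def using ri True by simp
              qed
            next
              case False
              hence "finite (U (i,j))" unfolding J_def by simp
              moreover have "{a\<in>Z. u a = v} \<subseteq> U (i,j)" unfolding U_def Pair using Z by auto
              ultimately show ?thesis using finite_subset by blast
            qed
          next
            case nr: False
            show ?thesis using fp[of i]
            proof (rule fin_sub_const)
              fix a assume "a \<in> {a\<in>Z. u a = v}"
              hence "a \<in> Z" "b a = i" unfolding Pair u_def by auto
              thus "a \<in> Z \<and> p' a = i" unfolding p'_def using nr by simp
            qed
          qed
        qed
      next
        have "{i. rich i \<and> infinite {a\<in>Z. b a = i}} \<subseteq> {r k}"
        proof
          fix i assume "i \<in> {i. rich i \<and> infinite {a\<in>Z. b a = i}}"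
          hence ri: "rich i" and inf: "infinite {a\<in>Z. b a = i}" by auto
          have "{a\<in>Z. b a = i} \<noteq> {}" using inf by (metis finite.emptyI)
          then obtain a where "a \<in> Z" "b a = i" by blast
          hence "to_nat_on R i = k" using Z(2) ri unfolding b'_def by auto
          hence "i = r k" using rt[of i] ri unfolding R_def by auto
          thus "i \<in> {r k}" by simp
        qed
        thus "finite {i. rich i \<and> infinite {a\<in>Z. b a = i}}" using finite_subset by blast
      qed
    next
      fix Z assume Z: "Z \<subseteq> X" and fb: "\<And>k. finite {a\<in>Z. b' a = k}"
      show "Z \<in> I"
      proof (rule K[OF Z])
        fix v show "finite {a\<in>Z. u a = v}"
        proof (cases v)
          case (Pair i j)
          show ?thesis using fb[of "if rich i then to_nat_on R i else 0"]
          proof (rule fin_sub_const)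
            fix a assume "a \<in> {a\<in>Z. u a = v}"
            hence "a \<in> Z" "b a = i" unfolding Pair u_def by auto
            thus "a \<in> Z \<and> b' a = (if rich i then to_nat_on R i else 0)" unfolding b'_def by simp
          qed
        qed
      next
        have E: "{i. rich i \<and> infinite {a\<in>Z. b a = i}} = {}"
        proof (rule equals0I)
          fix i assume "i \<in> {i. rich i \<and> infinite {a\<in>Z. b a = i}}"
          hence ri: "rich i" and inf: "infinite {a\<in>Z. b a = i}" by auto
          have "finite {a\<in>Z. b a = i}" using fb[of "to_nat_on R i"]
          proof (rule fin_sub_const)
            fix a assume "a \<in> {a\<in>Z. b a = i}"
            thus "a \<in> Z \<and> b' a = to_nat_on R i" unfolding b'_def using ri by auto
          qed
          thus False using inf by simp
        qed
        show "finite {i. rich i \<and> infinite {a\<in>Z. b a = i}}" unfolding E by (rule finite.emptyI)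
      qed
    qed
  qed
qed

definition adfam :: "nat set set \<Rightarrow> bool" where
  "adfam \<C> \<longleftrightarrow> (\<forall>C\<in>\<C>. infinite C) \<and> (\<forall>C\<in>\<C>. \<forall>D\<in>\<C>. C \<noteq> D \<longrightarrow> finite (C \<inter> D))"

lemma fresh_exists:
  assumes cC: "countable \<C>" and iC: "infinite \<C>" and ad: "adfam \<C>"
  shows "\<exists>D. infinite D \<and> (\<forall>C\<in>\<C>. finite (D \<inter> C))"
proof -
  have ne: "\<C> \<noteq> {}" using iC by auto
  define C where "C k = from_nat_into \<C> k" for k
  have rC: "range C = \<C>" unfolding C_def using range_from_nat_into[OF ne cC] .
  define W where "W k = (\<Union>i\<le>k. C i)" for k
  have coinf: "infinite (UNIV - W k)" for k
  proof -
    have "finite (C ` {..k})" by simp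
    hence "\<C> - C ` {..k} \<noteq> {}" using iC by (metis Diff_empty Diff_eq_empty_iff finite_subset)
    then obtain C' where C': "C' \<in> \<C>" "C' \<notin> C ` {..k}" by blast
    have "finite (C' \<inter> C i)" if "i \<le> k" for i
    proof -
      have "C i \<in> \<C>" "C' \<noteq> C i" using rC C' that by auto
      thus ?thesis using ad C'(1) unfolding adfam_def by blast
    qed
    hence "finite (\<Union>i\<le>k. C' \<inter> C i)" by (intro finite_UN_I) auto
    moreover have "C' \<inter> W k = (\<Union>i\<le>k. C' \<inter> C i)" unfolding W_def by auto
    ultimately have "finite (C' \<inter> W k)" by simp
    moreover have "infinite C'" using ad C'(1) unfolding adfam_def by blast
    ultimately have "infinite (C' - W k)" by (metis Diff_Diff_Int Diff_Int finite_Diff2 inf.commute)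
    moreover have "C' - W k \<subseteq> UNIV - W k" by auto
    ultimately show ?thesis using finite_subset by blast
  qed
  have ex: "\<exists>m. m > k \<and> m \<notin> W k" for k
    using coinf[of k] unfolding infinite_nat_iff_unbounded by auto
  define n where "n k = (SOME m. m > k \<and> m \<notin> W k)" for k
  have n: "n k > k" "n k \<notin> W k" for k using someI_ex[OF ex[of k]] unfolding n_def by auto
  define D where "D = range n"
  have "infinite D"
    unfolding D_def infinite_nat_iff_unbounded using n(1) by (metis rangeI)
  moreover have "finite (D \<inter> C')" if CC: "C' \<in> \<C>" for C'
  proof -
    obtain i where i: "C' = C i" using CC rC by blast
    have "D \<inter> C' \<subseteq> n ` {..<i}"
    proof
      fix m assume "m \<in> D \<inter> C'"
      then obtain k where k: "m = n k" "n k \<in> C i" unfolding D_def i by auto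
      have "k < i"
      proof (rule ccontr)
        assume "\<not> k < i"
        hence "i \<in> {..k}" by simp
        hence "C i \<subseteq> W k" unfolding W_def by blast
        thus False using n(2)[of k] k by auto
      qed
      thus "m \<in> n ` {..<i}" using k by auto
    qed
    thus ?thesis using finite_subset by blast
  qed
  ultimately show ?thesis by blast
qed

lemma construction:
  fixes G :: "nat set \<Rightarrow> nat set set \<Rightarrow> nat set \<Rightarrow> bool"
  assumes ch: "CH" and G: "\<And>N \<C> D. G N \<C> D \<Longrightarrow> infinite D \<and> (\<forall>C\<in>\<C>. finite (D \<inter> C))"
  shows "\<exists>\<A>. adfam \<A> \<and> infinite \<A> \<and> uncountable \<A> \<and>
     (\<forall>N. \<exists>\<C>. \<C> \<subseteq> \<A> \<and> countable \<C> \<and> \<C> \<noteq> {} \<and> ((\<exists>D. G N \<C> D) \<longrightarrow> (\<exists>D\<in>\<A>. G N \<C> D)))"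
proof -
  obtain r where wo: "Well_order r" and fld: "Field r = (UNIV::nat set set)"
    and cu: "\<And>a. countable (underS r a)" using CH_wo[OF ch] by blast
  have worel: "wo_rel r" using wo unfolding wo_rel_def .
  have wf: "wf (r - Id)" using wo_rel.WF[OF worel] .
  have tot: "(a,b) \<in> r \<or> (b,a) \<in> r" for a b using wo_rel.TOTALS[OF worel] fld by auto
  define col where "col k = range (\<lambda>m. prod_encode (k,m))" for k
  define B where "B = range col"
  have col_inf: "infinite (col k)" for k
  proof -
    have "inj (\<lambda>m. prod_encode (k,m))" by (rule injI) (simp add: prod_encode_eq)
    thus ?thesis unfolding col_def using finite_imageD by blast
  qed
  have col_disj: "k \<noteq> k' \<Longrightarrow> col k \<inter> col k' = {}" for k k'
    unfolding col_def using prod_encode_eq by auto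
  have adB: "adfam B" unfolding adfam_def B_def using col_inf col_disj by (metis finite.emptyI rangeE)
  have infB: "infinite B"
  proof -
    have "inj col"
    proof (rule injI)
      fix k k' assume "col k = col k'"
      thus "k = k'" using col_disj[of k k'] col_inf[of k] by (metis Int_absorb finite.emptyI)
    qed
    thus ?thesis unfolding B_def using finite_imageD by blast
  qed
  have cB: "countable B" unfolding B_def by simp
  define nw where "nw N \<C> = (if \<exists>D. G N \<C> D then {SOME D. G N \<C> D} else {})" for N \<C>
  define fr where "fr N \<C> = (SOME D. infinite D \<and> (\<forall>C\<in>\<C> \<union> nw N \<C>. finite (D \<inter> C)))" for N \<C>
  define stp where "stp N \<C> = nw N \<C> \<union> {fr N \<C>}" for N \<C>
  define F where "F f N = stp N (B \<union> \<Union>(f ` underS r N))" for f N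
  define S where "S = wfrec (r - Id) F"
  define Pre where "Pre N = B \<union> \<Union>(S ` underS r N)" for N
  have S_eq: "S N = stp N (Pre N)" for N
  proof -
    have "S N = F (cut S (r - Id) N) N" unfolding S_def by (rule wfrec[OF wf])
    moreover have "cut S (r - Id) N ` underS r N = S ` underS r N"
      by (rule image_cong) (auto simp: underS_def cut_apply)
    ultimately show ?thesis unfolding F_def Pre_def by simp
  qed
  have finS: "finite (S N)" for N unfolding S_eq stp_def nw_def by simp
  have cPre: "countable (Pre N)" for N
    unfolding Pre_def using cB cu finS by (intro countable_Un countable_UN) (auto intro: countable_finite)
  have infPre: "infinite (Pre N)" for N unfolding Pre_def using infB by (meson finite_Un)
  define Q where "Q N \<longleftrightarrow> (\<forall>D\<in>S N. infinite D \<and> (\<forall>C\<in>Pre N. finite (D \<inter> C))) \<and>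
      (\<forall>D\<in>S N. \<forall>D'\<in>S N. D \<noteq> D' \<longrightarrow> finite (D \<inter> D'))" for N
  have stepQ: "Q N" if adP: "adfam (Pre N)" for N
  proof -
    let ?C = "Pre N"
    have nwP: "infinite D \<and> (\<forall>C\<in>?C. finite (D \<inter> C))" if "D \<in> nw N ?C" for D
    proof -
      have ex: "\<exists>D. G N ?C D" using that unfolding nw_def by (auto split: if_splits)
      hence "D = (SOME D. G N ?C D)" using that unfolding nw_def by auto
      thus ?thesis using G someI_ex[OF ex] by simp
    qed
    have nw1: "D = D'" if "D \<in> nw N ?C" "D' \<in> nw N ?C" for D D'
      using that unfolding nw_def by (auto split: if_splits)
    have adU: "adfam (?C \<union> nw N ?C)"
      unfolding adfam_def
    proof (intro conjI ballI impI)
      fix C assume "C \<in> ?C \<union> nw N ?C"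
      thus "infinite C" using adP nwP unfolding adfam_def by blast
    next
      fix C D assume C: "C \<in> ?C \<union> nw N ?C" and D: "D \<in> ?C \<union> nw N ?C" and ne: "C \<noteq> D"
      show "finite (C \<inter> D)"
      proof (cases "C \<in> nw N ?C")
        case True
        show ?thesis
        proof (cases "D \<in> nw N ?C")
          case True thus ?thesis using nw1 \<open>C \<in> nw N ?C\<close> ne by blast
        next
          case False thus ?thesis using D nwP[OF \<open>C \<in> nw N ?C\<close>] by blast
        qed
      next
        case False
        show ?thesis
        proof (cases "D \<in> nw N ?C")
          case True thus ?thesis using C False nwP[OF True] by (metis Int_commute UnE)
        next
          case False thus ?thesis using C D \<open>C \<notin> nw N ?C\<close> ne adP unfolding adfam_def by blast
        qed
      qed
    qed
    have exf: "\<exists>D. infinite D \<and> (\<forall>C\<in>?C \<union> nw N ?C. finite (D \<inter> C))"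
    proof (rule fresh_exists)
      show "countable (?C \<union> nw N ?C)" using cPre[of N] unfolding nw_def by simp
      show "infinite (?C \<union> nw N ?C)" using infPre[of N] by simp
      show "adfam (?C \<union> nw N ?C)" by (rule adU)
    qed
    have frP: "infinite (fr N ?C) \<and> (\<forall>C\<in>?C \<union> nw N ?C. finite (fr N ?C \<inter> C))"
      unfolding fr_def using someI_ex[OF exf] .
    have p1: "\<forall>D\<in>nw N ?C \<union> {fr N ?C}. infinite D \<and> (\<forall>C\<in>?C. finite (D \<inter> C))"
      using nwP frP by blast
    have p2: "finite (D \<inter> D')" if D: "D \<in> nw N ?C \<union> {fr N ?C}" and D': "D' \<in> nw N ?C \<union> {fr N ?C}" and ne: "D \<noteq> D'" for D D'
    proof (cases "D \<in> nw N ?C")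
      case True
      hence "D' = fr N ?C" using D' ne nw1 by blast
      thus ?thesis using frP True by (metis Int_commute UnI2)
    next
      case False
      hence "D = fr N ?C" using D by blast
      moreover have "D' \<in> nw N ?C" using D' ne \<open>D = fr N ?C\<close> by blast
      ultimately show ?thesis using frP by blast
    qed
    show ?thesis unfolding Q_def S_eq stp_def using p1 p2 by blast
  qed
  have QD: "finite (D \<inter> C)" if "Q M" "D \<in> S M" "C \<in> Pre M" for M D C
    using that unfolding Q_def by blast
  have QInf: "infinite D" if "Q M" "D \<in> S M" for M D
    using that unfolding Q_def by blast
  have QS: "finite (D \<inter> D')" if "Q M" "D \<in> S M" "D' \<in> S M" "D \<noteq> D'" for M D D'
    using that unfolding Q_def by blast
  have adU: "adfam (B \<union> \<Union>(S ` T))" if QT: "\<forall>M\<in>T. Q M" for T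
  proof -
    have infC: "infinite C" if CC: "C \<in> B \<union> \<Union>(S ` T)" for C
    proof (cases "C \<in> B")
      case True thus ?thesis using adB unfolding adfam_def by blast
    next
      case False
      then obtain M where "M \<in> T" "C \<in> S M" using CC by blast
      thus ?thesis using QInf QT by blast
    qed
    have key: "finite (C \<inter> D)" if C1: "C \<in> S M1" "M1 \<in> T" and D1: "D \<in> B \<union> \<Union>(S ` T)" 
       and nD: "\<not> (\<exists>M2\<in>T. D \<in> S M2 \<and> (M1, M2) \<in> r \<and> M1 \<noteq> M2)" and ne: "C \<noteq> D" for C D M1
    proof (cases "D \<in> B")
      case True
      hence "D \<in> Pre M1" unfolding Pre_def by simp
      thus ?thesis using QD[of M1 C D] QT C1 by blast
    next
      case False
      then obtain M2 where M2: "M2 \<in> T" "D \<in> S M2" using D1 by blast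
      show ?thesis
      proof (cases "M1 = M2")
        case True thus ?thesis using QS[of M1 C D] QT C1 M2 ne by blast
      next
        case False
        have "\<not> ((M1, M2) \<in> r)" using nD M2 False by blast
        hence "(M2, M1) \<in> r" using tot by blast
        hence "M2 \<in> underS r M1" using False unfolding underS_def by auto
        hence "D \<in> Pre M1" using M2 unfolding Pre_def by blast
        thus ?thesis using QD[of M1 C D] QT C1 by blast
      qed
    qed
    have finCD: "finite (C \<inter> D)" if C: "C \<in> B \<union> \<Union>(S ` T)" and D: "D \<in> B \<union> \<Union>(S ` T)" and ne: "C \<noteq> D" for C D
    proof (cases "C \<in> B")
      case True
      show ?thesis
      proof (cases "D \<in> B")
        case True thus ?thesis using \<open>C \<in> B\<close> adB ne unfolding adfam_def by blast
      next
        case False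
        then obtain M where M: "M \<in> T" "D \<in> S M" using D by blast
        have "C \<in> Pre M" using \<open>C \<in> B\<close> unfolding Pre_def by simp
        hence "finite (D \<inter> C)" using QD[of M D C] QT M by blast
        thus ?thesis by (simp add: Int_commute)
      qed
    next
      case False
      then obtain M1 where M1: "M1 \<in> T" "C \<in> S M1" using C by blast
      show ?thesis
      proof (cases "\<exists>M2\<in>T. D \<in> S M2 \<and> (M1, M2) \<in> r \<and> M1 \<noteq> M2")
        case True
        then obtain M2 where M2: "M2 \<in> T" "D \<in> S M2" "(M1, M2) \<in> r" "M1 \<noteq> M2" by blast
        hence "M1 \<in> underS r M2" unfolding underS_def by auto
        hence "C \<in> Pre M2" using M1 unfolding Pre_def by blast
        hence "finite (D \<inter> C)" using QD[of M2 D C] QT M2 by blast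
        thus ?thesis by (simp add: Int_commute)
      next
        case False show ?thesis using key[OF M1(2) M1(1) D False ne] .
      qed
    qed
    show ?thesis unfolding adfam_def using infC finCD by blast
  qed
  have allQ: "Q N" for N
    using wf
  proof (induction N rule: wf_induct_rule)
    case (less N)
    have "\<forall>M\<in>underS r N. Q M" using less unfolding underS_def by auto
    hence "adfam (Pre N)" unfolding Pre_def by (rule adU)
    thus ?case by (rule stepQ)
  qed
  define \<A> where "\<A> = B \<union> \<Union>(S ` UNIV)"
  have ad\<A>: "adfam \<A>" unfolding \<A>_def using allQ by (intro adU) auto
  have inf\<A>: "infinite \<A>" unfolding \<A>_def using infB by (meson finite_Un)
  define f where "f N = fr N (Pre N)" for N
  have fS: "f N \<in> S N" for N unfolding f_def S_eq stp_def by simp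
  have injf: "inj f"
  proof (rule injI)
    fix N1 N2 assume eq: "f N1 = f N2"
    show "N1 = N2"
    proof (rule ccontr)
      assume ne: "N1 \<noteq> N2"
      have "finite (f N1 \<inter> f N2)"
      proof (cases "(N1, N2) \<in> r")
        case True
        hence "f N1 \<in> Pre N2" using ne fS unfolding Pre_def underS_def by blast
        hence "finite (f N2 \<inter> f N1)" using QD[OF allQ[of N2] fS[of N2]] by blast
        thus ?thesis by (simp add: Int_commute)
      next
        case False
        hence "(N2, N1) \<in> r" using tot by blast
        hence "f N2 \<in> Pre N1" using ne fS unfolding Pre_def underS_def by blast
        thus ?thesis using QD[OF allQ[of N1] fS[of N1]] by blast
      qed
      moreover have "infinite (f N1)" using QInf[OF allQ[of N1] fS[of N1]] .
      ultimately show False using eq by simp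
    qed
  qed
  have unc: "uncountable \<A>"
  proof
    assume "countable \<A>"
    moreover have "range f \<subseteq> \<A>" unfolding \<A>_def using fS by blast
    ultimately have "countable (range f)" using countable_subset by blast
    hence "countable (UNIV :: nat set set)" using injf by (metis countable_image_inj_on inj_on_subset subset_UNIV)
    moreover have "(UNIV :: nat set set) \<approx> (UNIV :: real set)" by (rule nat_sets_eqpoll_reals)
    ultimately have "countable (UNIV :: real set)" using countable_eqpoll eqpoll_sym by blast
    thus False using uncountable_UNIV_real by simp
  qed
  have stage: "\<exists>\<C>. \<C> \<subseteq> \<A> \<and> countable \<C> \<and> \<C> \<noteq> {} \<and> ((\<exists>D. G N \<C> D) \<longrightarrow> (\<exists>D\<in>\<A>. G N \<C> D))" for N
  proof (intro exI[of _ "Pre N"] conjI impI)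
    show "Pre N \<subseteq> \<A>" unfolding Pre_def \<A>_def by blast
    show "countable (Pre N)" by (rule cPre)
    show "Pre N \<noteq> {}" using infPre[of N] by auto
    assume ex: "\<exists>D. G N (Pre N) D"
    have "(SOME D. G N (Pre N) D) \<in> S N" unfolding S_eq stp_def nw_def using ex by simp
    hence "(SOME D. G N (Pre N) D) \<in> \<A>" unfolding \<A>_def by blast
    thus "\<exists>D\<in>\<A>. G N (Pre N) D" using someI_ex[OF ex] by blast
  qed
  show ?thesis using ad\<A> inf\<A> unc stage by (intro exI[of _ \<A>]) simp
qed

definition img :: "('a \<Rightarrow> nat option) \<Rightarrow> 'a set \<Rightarrow> nat set" where
  "img h Z = {m. \<exists>a\<in>Z. h a = Some m}"

definition good :: "'a set \<Rightarrow> 'a set set \<Rightarrow> ('a \<Rightarrow> nat option) \<Rightarrow> nat set set \<Rightarrow> 'a set \<Rightarrow> bool" where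
  "good X I h \<C> Z \<longleftrightarrow> Z \<subseteq> X \<and> Z \<notin> I \<and> (\<forall>a\<in>Z. h a \<noteq> None) \<and> (\<forall>m. finite {a\<in>Z. h a = Some m})
     \<and> (\<forall>C\<in>\<C>. finite (img h Z \<inter> C))"

lemma main_contra:
  fixes X :: "'a set" and x :: "'a \<Rightarrow> mpoint"
  assumes id: "is_ideal X I" and cX: "countable X" and unb: "unboring I"
    and xc: "\<And>a. a \<in> X \<Longrightarrow> x a \<in> mrowka_carrier \<A>"
    and NC: "\<And>A y. A \<subseteq> X \<Longrightarrow> A \<notin> I \<Longrightarrow> y \<in> mrowka_carrier \<A> \<Longrightarrow> \<not> conv (Mrowka \<A>) x A y"
    and CA: "\<C> \<subseteq> \<A>" and cC: "countable \<C>" and neC: "\<C> \<noteq> {}"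
    and hdef: "\<And>a. h a = (if a \<in> X then (case x a of Pt m \<Rightarrow> Some m | _ \<Rightarrow> None) else None)"
    and ng: "\<And>Z. \<not> good X I h \<C> Z"
  shows False
proof -
  have hPt: "h a = Some m \<longleftrightarrow> x a = Pt m" if "a \<in> X" for a m
    using that hdef[of a] by (cases "x a") auto
  have xAd: "E \<in> \<A>" if "a \<in> X" "x a = Ad E" for a E
    using xc[OF that(1)] that(2) unfolding mrowka_carrier_def by auto
  define C where "C k = from_nat_into \<C> k" for k
  have rC: "range C = \<C>" unfolding C_def using range_from_nat_into[OF neC cC] .
  have CinA: "C k \<in> \<A>" for k using rC CA by blast
  define bm where "bm m = (if \<exists>k. m \<in> C k then (LEAST k. m \<in> C k) + 3 else 0)" for m
  define b where "b a = (case x a of Pt m \<Rightarrow> bm m | Ad E \<Rightarrow> 1 | Infty \<Rightarrow> 2)" for a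
  define p where "p a = to_nat_on (x ` X) (x a)" for a
  have bPt: "x a = Pt m \<Longrightarrow> b a = bm m" for a m unfolding b_def by simp
  have bAd: "x a = Ad E \<Longrightarrow> b a = 1" for a E unfolding b_def by simp
  have bInf: "x a = Infty \<Longrightarrow> b a = 2" for a unfolding b_def by simp
  have cxX: "countable (x ` X)" using cX by simp
  have fibI: "{a\<in>X. x a = y} \<in> I" for y
  proof (rule ccontr)
    assume nI: "{a\<in>X. x a = y} \<notin> I"
    have "{} \<in> I" using ideal_fin[OF id, of "{}"] by simp
    hence "{a\<in>X. x a = y} \<noteq> {}" using nI by metis
    then obtain a where "a \<in> X" "x a = y" by blast
    hence yc: "y \<in> mrowka_carrier \<A>" using xc by blast
    have "conv (Mrowka \<A>) x {a\<in>X. x a = y} y" by (rule conv_const) simp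
    thus False using NC[OF _ nI yc] by auto
  qed
  have goodF: False if gZ: "good X I h \<C> Z" for Z
    using ng gZ by blast
  have ftoone: "finite {a\<in>Z. x a = y}" if Z: "Z \<subseteq> X" and fp: "\<And>j. finite {a\<in>Z. p a = j}" for Z y
  proof -
    have "{a\<in>Z. x a = y} \<subseteq> {a\<in>Z. p a = to_nat_on (x ` X) y}" unfolding p_def by auto
    thus ?thesis using fp finite_subset by blast
  qed
  have i: "{a\<in>X. b a = i \<and> p a = j} \<in> I" for i j
  proof -
    have "{a\<in>X. b a = i \<and> p a = j} \<subseteq> {a\<in>X. x a = from_nat_into (x ` X) j}"
    proof
      fix a assume a: "a \<in> {a\<in>X. b a = i \<and> p a = j}"
      hence "from_nat_into (x ` X) j = from_nat_into (x ` X) (to_nat_on (x ` X) (x a))" unfolding p_def by simp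
      also have "\<dots> = x a" using cxX a by simp
      finally show "a \<in> {a\<in>X. x a = from_nat_into (x ` X) j}" using a by simp
    qed
    thus ?thesis using fibI ideal_sub[OF id] by blast
  qed
  have ii: "Z \<in> I" if Z: "Z \<subseteq> X" and bZ: "\<forall>a\<in>Z. b a = i" and fp: "\<And>j. finite {a\<in>Z. p a = j}" for i Z
  proof (rule ccontr)
    assume nI: "Z \<notin> I"
    have fx: "finite {a\<in>Z. x a = y}" for y using ftoone[OF Z fp] .
    show False
    proof (cases "i \<le> 2")
      case True
      hence "i = 0 \<or> i = 1 \<or> i = 2" by auto
      moreover
      { assume i0: "i = 0"
        have xPt: "\<exists>m. x a = Pt m \<and> \<not> (\<exists>k. m \<in> C k)" if "a \<in> Z" for a
        proof (cases "x a")
          case (Pt m) thus ?thesis using bZ that i0 bPt[OF Pt] unfolding bm_def by (auto split: if_splits)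
        next
          case (Ad E) thus ?thesis using bZ that i0 bAd[OF Ad] by auto
        next
          case Infty thus ?thesis using bZ that i0 bInf[OF Infty] by auto
        qed
        have "good X I h \<C> Z" unfolding good_def
        proof (intro conjI ballI allI)
          show "Z \<subseteq> X" "Z \<notin> I" using Z nI by auto
          fix a assume "a \<in> Z" thus "h a \<noteq> None" using xPt hPt Z by blast
        next
          fix m have "{a\<in>Z. h a = Some m} = {a\<in>Z. x a = Pt m}" using hPt Z by auto
          thus "finite {a\<in>Z. h a = Some m}" using fx by simp
        next
          fix C' assume "C' \<in> \<C>"
          then obtain k where k: "C' = C k" using rC by blast
          have "img h Z \<inter> C' = {}"
          proof (rule equals0I)
            fix m assume "m \<in> img h Z \<inter> C'"
            then obtain a where a: "a \<in> Z" "h a = Some m" "m \<in> C k" unfolding img_def k by auto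
            hence "x a = Pt m" using hPt Z by auto
            thus False using xPt[OF a(1)] a(3) by auto
          qed
          thus "finite (img h Z \<inter> C')" by simp
        qed
        hence False by (rule goodF) }
      moreover
      { assume i1: "i = 1"
        have xA: "x a \<in> Ad ` \<A>" if "a \<in> Z" for a
        proof (cases "x a")
          case (Pt m) thus ?thesis using bZ that i1 bPt[OF Pt] unfolding bm_def by (auto split: if_splits)
        next
          case (Ad E) thus ?thesis using xAd[of a E] Z that by auto
        next
          case Infty thus ?thesis using bZ that i1 bInf[OF Infty] by auto
        qed
        have "conv (Mrowka \<A>) x Z Infty" by (rule conv_Infty[OF xA fx])
        hence False using NC[OF Z nI] unfolding mrowka_carrier_def by auto }
      moreover
      { assume i2: "i = 2"
        have "Z \<subseteq> {a\<in>Z. x a = Infty}"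
        proof
          fix a assume a: "a \<in> Z"
          show "a \<in> {a\<in>Z. x a = Infty}"
          proof (cases "x a")
            case (Pt m) thus ?thesis using bZ a i2 bPt[OF Pt] unfolding bm_def by (auto split: if_splits)
          next
            case (Ad E) thus ?thesis using bZ a i2 bAd[OF Ad] by auto
          next
            case Infty thus ?thesis using a by auto
          qed
        qed
        hence "finite Z" using fx[of Infty] finite_subset by blast
        hence False using nI ideal_fin[OF id] Z by blast }
      ultimately show False by blast
    next
      case False
      define k where "k = i - 3"
      have xP: "\<exists>m. x a = Pt m \<and> m \<in> C k" if "a \<in> Z" for a
      proof (cases "x a")
        case (Pt m)
        have bi: "bm m = i" using bZ that bPt[OF Pt] by auto
        hence ex: "\<exists>k. m \<in> C k" using False unfolding bm_def by (auto split: if_splits)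
        hence "(LEAST k. m \<in> C k) = k" using bi unfolding bm_def k_def by auto
        hence "m \<in> C k" using LeastI_ex[OF ex] by simp
        thus ?thesis using Pt by blast
      next
        case (Ad E) thus ?thesis using bZ that False bAd[OF Ad] by auto
      next
        case Infty thus ?thesis using bZ that False bInf[OF Infty] by auto
      qed
      have "conv (Mrowka \<A>) x Z (Ad (C k))"
      proof (rule conv_Ad[OF CinA])
        fix a assume "a \<in> Z" thus "x a \<in> Pt ` C k" using xP by blast
      next
        fix m show "finite {a\<in>Z. x a = Pt m}" by (rule fx)
      qed
      thus False using NC[OF Z nI] CinA unfolding mrowka_carrier_def by auto
    qed
  qed
  have iii: "Z \<in> I" if Z: "Z \<subseteq> X" and fb: "\<And>i. finite {a\<in>Z. b a = i}" for Z
  proof -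
    define Zp where "Zp = {a\<in>Z. \<exists>m. x a = Pt m}"
    have cover: "Z \<subseteq> Zp \<union> ({a\<in>Z. b a = 1} \<union> {a\<in>Z. b a = 2})"
    proof
      fix a assume a: "a \<in> Z"
      show "a \<in> Zp \<union> ({a\<in>Z. b a = 1} \<union> {a\<in>Z. b a = 2})"
        using a bAd bInf unfolding Zp_def by (cases "x a") auto
    qed
    have fI: "{a\<in>Z. b a = 1} \<union> {a\<in>Z. b a = 2} \<in> I"
      using fb[of 1] fb[of 2] Z by (intro ideal_fin[OF id]) auto
    have "Zp \<in> I"
    proof (rule ccontr)
      assume nI: "Zp \<notin> I"
      have ZpX: "Zp \<subseteq> X" using Z unfolding Zp_def by auto
      have "good X I h \<C> Zp" unfolding good_def
      proof (intro conjI ballI allI)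
        show "Zp \<subseteq> X" "Zp \<notin> I" using ZpX nI by auto
        fix a assume "a \<in> Zp" thus "h a \<noteq> None" using hPt ZpX unfolding Zp_def by blast
      next
        fix m
        have "{a\<in>Zp. h a = Some m} \<subseteq> {a\<in>Z. b a = bm m}" using hPt ZpX bPt unfolding Zp_def by auto
        thus "finite {a\<in>Zp. h a = Some m}" using fb finite_subset by blast
      next
        fix C' assume "C' \<in> \<C>"
        then obtain k where k: "C' = C k" using rC by blast
        define W where "W = {a\<in>Z. b a \<le> k + 3}"
        have fW: "finite W"
        proof -
          have "W = (\<Union>i\<in>{..k+3}. {a\<in>Z. b a = i})" unfolding W_def by auto
          thus ?thesis using fb by simp
        qed
        define g where "g a = (case x a of Pt m \<Rightarrow> m | _ \<Rightarrow> 0)" for a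
        have "img h Zp \<inter> C' \<subseteq> g ` W"
        proof
          fix m assume "m \<in> img h Zp \<inter> C'"
          then obtain a where a: "a \<in> Zp" "h a = Some m" "m \<in> C k" unfolding img_def k by auto
          have xa: "x a = Pt m" using a hPt ZpX by auto
          have ex: "\<exists>k. m \<in> C k" using a by blast
          have "(LEAST k. m \<in> C k) \<le> k" using a(3) by (rule Least_le)
          hence "b a \<le> k + 3" using bPt[OF xa] ex unfolding bm_def by simp
          hence "a \<in> W" using a(1) unfolding W_def Zp_def by auto
          moreover have "g a = m" unfolding g_def using xa by simp
          ultimately show "m \<in> g ` W" by blast
        qed
        thus "finite (img h Zp \<inter> C')" using fW finite_subset by blast
      qed
      thus False by (rule goodF)
    qed
    thus ?thesis using cover fI by (meson ideal_cover[OF id])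
  qed
  have "ideal_below BI I"
    apply (rule boring_crit[OF id cX, of b p])
      apply (rule i)
     apply (rule ii; assumption)
    apply (rule iii; assumption)
    done
  thus False using unb unfolding unboring_def by simp
qed

definition task :: "'a set \<Rightarrow> nat set \<Rightarrow> 'a \<Rightarrow> nat option" where
  "task X N a = (if a \<in> X \<and> (\<exists>m. prod_encode (to_nat_on X a, m) \<in> N)
      then Some (LEAST m. prod_encode (to_nat_on X a, m) \<in> N) else None)"

lemma task_surj:
  assumes cX: "countable X" and h: "\<And>a. a \<notin> X \<Longrightarrow> h a = None"
  shows "\<exists>N. task X N = h"
proof -
  define N where "N = {prod_encode (to_nat_on X a, m) | a m. a \<in> X \<and> h a = Some m}"
  have key: "prod_encode (to_nat_on X a, m) \<in> N \<longleftrightarrow> h a = Some m" if a: "a \<in> X" for a m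
  proof
    assume "prod_encode (to_nat_on X a, m) \<in> N"
    then obtain a' m' where a': "a' \<in> X" "h a' = Some m'" "prod_encode (to_nat_on X a, m) = prod_encode (to_nat_on X a', m')"
      unfolding N_def by blast
    hence "to_nat_on X a = to_nat_on X a'" "m = m'" using prod_encode_eq by auto
    hence "a = a'" using cX a a'(1) by simp
    thus "h a = Some m" using a' \<open>m = m'\<close> by simp
  next
    assume "h a = Some m" thus "prod_encode (to_nat_on X a, m) \<in> N" using a unfolding N_def by blast
  qed
  have "task X N a = h a" for a
  proof (cases "a \<in> X")
    case True
    show ?thesis
    proof (cases "h a")
      case None thus ?thesis using key[OF True] unfolding task_def by simp
    next
      case (Some m)
      hence "(LEAST m'. prod_encode (to_nat_on X a, m') \<in> N) = m"
        using key[OF True] by (intro Least_equality) auto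
      thus ?thesis using key[OF True] Some True unfolding task_def by auto
    qed
  next
    case False thus ?thesis using h unfolding task_def by simp
  qed
  thus ?thesis by blast
qed

theorem theorem5p5:
  fixes X :: "'a set" and I :: "'a set set"
  assumes "CH"
    and "countable X" and "infinite X"
    and "is_ideal X I"
    and "unboring I"
  shows "\<exists>\<A>. almost_disjoint_family \<A> \<and> uncountable \<A> \<and> FinBW (Mrowka \<A>) I"
proof -
  note ch = assms(1) and cX = assms(2) and id = assms(4) and unb = assms(5)
  have UI: "\<Union>I = X" by (rule ideal_Union_eq[OF id])
  define G where "G N \<C> D \<longleftrightarrow> (\<exists>Z. good X I (task X N) \<C> Z \<and> D = img (task X N) Z)" for N \<C> D
  have Gp: "infinite D \<and> (\<forall>C\<in>\<C>. finite (D \<inter> C))" if GG: "G N \<C> D" for N \<C> D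
  proof -
    obtain Z where Z: "good X I (task X N) \<C> Z" "D = img (task X N) Z" using GG unfolding G_def by blast
    let ?h = "task X N"
    have Zi: "infinite Z" using Z(1) ideal_pos_infinite[OF id] unfolding good_def by blast
    have "infinite D"
    proof
      assume fD: "finite D"
      have "Z \<subseteq> (\<Union>m\<in>D. {a\<in>Z. ?h a = Some m})"
      proof
        fix a assume a: "a \<in> Z"
        then obtain m where m: "?h a = Some m" using Z(1) unfolding good_def by blast
        hence "m \<in> D" using a Z(2) unfolding img_def by blast
        thus "a \<in> (\<Union>m\<in>D. {a\<in>Z. ?h a = Some m})" using a m by blast
      qed
      moreover have "finite (\<Union>m\<in>D. {a\<in>Z. ?h a = Some m})" using fD Z(1) unfolding good_def by blast
      ultimately show False using Zi finite_subset by blast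
    qed
    thus ?thesis using Z unfolding good_def by blast
  qed
  obtain \<A> where adA: "adfam \<A>" and infA: "infinite \<A>" and uncA: "uncountable \<A>"
    and stage: "\<And>N. \<exists>\<C>. \<C> \<subseteq> \<A> \<and> countable \<C> \<and> \<C> \<noteq> {} \<and> ((\<exists>D. G N \<C> D) \<longrightarrow> (\<exists>D\<in>\<A>. G N \<C> D))"
  proof -
    have "\<exists>\<A>. adfam \<A> \<and> infinite \<A> \<and> uncountable \<A> \<and>
     (\<forall>N. \<exists>\<C>. \<C> \<subseteq> \<A> \<and> countable \<C> \<and> \<C> \<noteq> {} \<and> ((\<exists>D. G N \<C> D) \<longrightarrow> (\<exists>D\<in>\<A>. G N \<C> D)))"
      by (rule construction[OF ch]) (erule Gp)
    thus ?thesis using that by blast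
  qed
  have adf: "almost_disjoint_family \<A>" using adA infA unfolding adfam_def almost_disjoint_family_def by blast
  have ad: "ad \<A>" using adA unfolding adfam_def ad_def by blast
  have "FinBW (Mrowka \<A>) I"
    unfolding FinBW_def UI
  proof (intro conjI allI impI)
    show "Hausdorff_space (Mrowka \<A>)" by (rule Hausdorff_M[OF ad])
    fix x :: "'a \<Rightarrow> mpoint" assume xt: "\<forall>n\<in>X. x n \<in> topspace (Mrowka \<A>)"
    show "\<exists>A\<subseteq>X. A \<notin> I \<and> (\<exists>y\<in>topspace (Mrowka \<A>). \<forall>U. openin (Mrowka \<A>) U \<and> y \<in> U \<longrightarrow> finite {n \<in> A. x n \<notin> U})"
    proof (rule ccontr)
      assume nc: "\<not> ?thesis"
      have NC: "\<not> conv (Mrowka \<A>) x A y" if "A \<subseteq> X" "A \<notin> I" "y \<in> mrowka_carrier \<A>" for A y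
        using nc that unfolding conv_def topspace_M by blast
      have xc: "x a \<in> mrowka_carrier \<A>" if "a \<in> X" for a using xt that unfolding topspace_M by blast
      define h where "h a = (if a \<in> X then (case x a of Pt m \<Rightarrow> Some m | _ \<Rightarrow> None) else None)" for a
      obtain N where N: "task X N = h" using task_surj[OF cX, of h] unfolding h_def by auto
      obtain \<C> where C: "\<C> \<subseteq> \<A>" "countable \<C>" "\<C> \<noteq> {}" and st: "(\<exists>D. G N \<C> D) \<longrightarrow> (\<exists>D\<in>\<A>. G N \<C> D)"
        using stage[of N] by blast
      have hPt: "h a = Some m \<longleftrightarrow> x a = Pt m" if "a \<in> X" for a m
        using that unfolding h_def by (cases "x a") auto
      have ng: "\<not> good X I h \<C> Z" for Z
      proof
        assume "good X I h \<C> Z"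
        hence "G N \<C> (img h Z)" unfolding G_def N by blast
        then obtain D where D: "D \<in> \<A>" "G N \<C> D" using st by blast
        then obtain Z' where Z': "good X I h \<C> Z'" "D = img h Z'" unfolding G_def N by blast
        have Z'X: "Z' \<subseteq> X" using Z' unfolding good_def by blast
        have "conv (Mrowka \<A>) x Z' (Ad D)"
        proof (rule conv_Ad[OF D(1)])
          fix a assume a: "a \<in> Z'"
          then obtain m where "h a = Some m" using Z' unfolding good_def by blast
          hence "x a = Pt m" "m \<in> D" using hPt Z'X a Z'(2) unfolding img_def by auto
          thus "x a \<in> Pt ` D" by blast
        next
          fix m
          have "{a\<in>Z'. x a = Pt m} = {a\<in>Z'. h a = Some m}" using hPt Z'X by auto
          thus "finite {a\<in>Z'. x a = Pt m}" using Z' unfolding good_def by simp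
        qed
        moreover have "Z' \<notin> I" using Z' unfolding good_def by blast
        moreover have "Ad D \<in> mrowka_carrier \<A>" using D unfolding mrowka_carrier_def by blast
        ultimately show False using NC Z'X by blast
      qed
      show False
        by (rule main_contra[OF id cX unb xc NC C(1) C(2) C(3) h_def ng]) auto
    qed
  qed
  thus ?thesis using adf uncA by blast
qed

end
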